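(* Let $G=G_1\ast_C G_2$ be an amalgamated free product over an infinite cyclic subgroup $C$. If $G_2$ is abelian, assume furthermore that $G_2=K\oplus L$ with $C\leqslant K$ and $|L|>2$. Then $G$ has a nontrivial automorphism whose restriction to $G_1$ is the identity. *)

theory Defs
  imports "HOL-Algebra.Algebra"
begin

text \<open>G is (internally) the amalgamated free product of its subgroups G1 and G2 over
  C = G1 \<inter> G2: G is generated by G1 \<union> G2, and every pair of homomorphisms
  from G1 and G2 into a group H that agree on C extends to a homomorphism G \<rightarrow> H
  (the pushout universal property; uniqueness of the extension follows from generation).
  Target groups H range over groups whose carrier lies in the element type of G.\<close>
definition amalgamated_free_product ::
  "('a, 'b) monoid_scheme \<Rightarrow> 'a set \<Rightarrow> 'a set \<Rightarrow> 'a set \<Rightarrow> bool" where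
  "amalgamated_free_product G G1 G2 C \<longleftrightarrow>
     group G \<and> subgroup G1 G \<and> subgroup G2 G \<and> G1 \<inter> G2 = C \<and>
     generate G (G1 \<union> G2) = carrier G \<and>
     (\<forall>(H :: 'a monoid) h1 h2.
        group H \<and> h1 \<in> hom (G\<lparr>carrier := G1\<rparr>) H \<and> h2 \<in> hom (G\<lparr>carrier := G2\<rparr>) H \<and>
        (\<forall>c\<in>C. h1 c = h2 c) \<longrightarrow>
        (\<exists>h \<in> hom G H. (\<forall>x\<in>G1. h x = h1 x) \<and> (\<forall>x\<in>G2. h x = h2 x)))"

definition infinite_cyclic_subgroup :: "('a, 'b) monoid_scheme \<Rightarrow> 'a set \<Rightarrow> bool" where
  "infinite_cyclic_subgroup G C \<longleftrightarrow>
     subgroup C G \<and> infinite C \<and> (\<exists>c\<in>C. C = generate G {c})"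

definition internal_direct_sum :: "('a, 'b) monoid_scheme \<Rightarrow> 'a set \<Rightarrow> 'a set \<Rightarrow> 'a set \<Rightarrow> bool" where
  "internal_direct_sum G A K L \<longleftrightarrow>
     subgroup K G \<and> subgroup L G \<and> K \<subseteq> A \<and> L \<subseteq> A \<and>
     K \<inter> L = {\<one>\<^bsub>G\<^esub>} \<and> K <#>\<^bsub>G\<^esub> L = A"

end

theory Submission imports Defs begin

lemma hom_agree_generate:
  assumes G: "group G" and H: "group H" and f: "f \<in> hom G H" and g: "g \<in> hom G H"
    and S: "S \<subseteq> carrier G" and agree: "\<forall>x\<in>S. f x = g x"
  shows "\<forall>x\<in>generate G S. f x = g x"
proof
  interpret gf: group_hom G H f using G H f by (simp add: group_hom_def group_hom_axioms_def)
  interpret gg: group_hom G H g using G H g by (simp add: group_hom_def group_hom_axioms_def)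
  fix x assume "x \<in> generate G S"
  then show "f x = g x"
  proof induction
    case one then show ?case by simp
  next
    case (incl h) then show ?case using agree by simp
  next
    case (inv h) then show ?case using agree S by (auto simp: gf.hom_inv gg.hom_inv)
  next
    case (eng h1 h2)
    have "h1 \<in> carrier G" "h2 \<in> carrier G" using eng.hyps gf.G.generate_in_carrier S by auto
    then show ?case using eng.IH by simp
  qed
qed

definition trunc :: "('a,'b) monoid_scheme \<Rightarrow> 'a monoid" where
  "trunc G = \<lparr>carrier = carrier G, monoid.mult = monoid.mult G, one = one G\<rparr>"

lemma group_trunc: assumes "group G" shows "group (trunc G)"
proof -
  interpret group G by fact
  show ?thesis
    apply unfold_locales
    apply (auto simp: trunc_def m_assoc Units_def)
    by (metis l_inv r_inv inv_closed)
qed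

lemma hom_trunc: "hom A (trunc G) = hom A G"
  by (simp add: hom_def trunc_def)


lemma afp_auto:
  assumes afp: "amalgamated_free_product G G1 G2 C"
  and h: "\<psi> \<in> hom (G\<lparr>carrier := G2\<rparr>) G" "\<psi>' \<in> hom (G\<lparr>carrier := G2\<rparr>) G"
  and im: "\<psi> ` G2 \<subseteq> G2" "\<psi>' ` G2 \<subseteq> G2"
  and inv1: "\<forall>x\<in>G2. \<psi>' (\<psi> x) = x" and inv2: "\<forall>x\<in>G2. \<psi> (\<psi>' x) = x"
  and fixC: "\<forall>c\<in>C. \<psi> c = c" "\<forall>c\<in>C. \<psi>' c = c"
  and nt: "\<exists>x\<in>G2. \<psi> x \<noteq> x"
  shows "\<exists>\<phi>. \<phi> \<in> iso G G \<and> (\<forall>x\<in>G1. \<phi> x = x) \<and> (\<exists>x\<in>carrier G. \<phi> x \<noteq> x)"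
proof -
  have G: "group G" and s1: "subgroup G1 G" and s2: "subgroup G2 G" and C: "G1 \<inter> G2 = C"
    and gen: "generate G (G1 \<union> G2) = carrier G"
    and UP: "\<And>(H :: 'a monoid) h1 h2. group H \<Longrightarrow> h1 \<in> hom (G\<lparr>carrier := G1\<rparr>) H \<Longrightarrow>
        h2 \<in> hom (G\<lparr>carrier := G2\<rparr>) H \<Longrightarrow> (\<forall>c\<in>C. h1 c = h2 c) \<Longrightarrow>
        (\<exists>h \<in> hom G H. (\<forall>x\<in>G1. h x = h1 x) \<and> (\<forall>x\<in>G2. h x = h2 x))"
    using afp unfolding amalgamated_free_product_def by blast+
  interpret group G by fact
  have idh: "(\<lambda>x. x) \<in> hom (G\<lparr>carrier := G1\<rparr>) (trunc G)"
    using s1 by (auto simp: hom_def trunc_def dest: subgroup.mem_carrier)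
  have gt: "group (trunc G)" using group_trunc G by blast
  obtain \<phi> where ph: "\<phi> \<in> hom G G" "\<forall>x\<in>G1. \<phi> x = x" "\<forall>x\<in>G2. \<phi> x = \<psi> x"
    using UP[OF gt idh, of \<psi>] h(1) fixC(1) C hom_trunc by (metis IntI)
  obtain \<phi>' where ph': "\<phi>' \<in> hom G G" "\<forall>x\<in>G1. \<phi>' x = x" "\<forall>x\<in>G2. \<phi>' x = \<psi>' x"
    using UP[OF gt idh, of \<psi>'] h(2) fixC(2) C hom_trunc by (metis IntI)
  have sub: "G1 \<union> G2 \<subseteq> carrier G" using s1 s2 subgroup.subset by blast
  have idG: "(\<lambda>x. x) \<in> hom G G" by (simp add: hom_def)
  have a1: "\<forall>x\<in>G1 \<union> G2. compose (carrier G) \<phi>' \<phi> x = x"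
  proof
    fix x assume x: "x \<in> G1 \<union> G2"
    then have xc: "x \<in> carrier G" using sub by blast
    show "compose (carrier G) \<phi>' \<phi> x = x"
    proof (cases "x \<in> G1")
      case True then show ?thesis using xc ph(2) ph'(2) by (simp add: compose_eq)
    next
      case False then have "x \<in> G2" using x by blast
      then show ?thesis using xc ph(3) ph'(3) im(1) inv1 by (simp add: compose_eq image_subset_iff)
    qed
  qed
  have a2: "\<forall>x\<in>G1 \<union> G2. compose (carrier G) \<phi> \<phi>' x = x"
  proof
    fix x assume x: "x \<in> G1 \<union> G2"
    then have xc: "x \<in> carrier G" using sub by blast
    show "compose (carrier G) \<phi> \<phi>' x = x"
    proof (cases "x \<in> G1")
      case True then show ?thesis using xc ph'(2) ph(2) by (simp add: compose_eq)
    next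
      case False then have "x \<in> G2" using x by blast
      then show ?thesis using xc ph'(3) ph(3) im(2) inv2 by (simp add: compose_eq image_subset_iff)
    qed
  qed
  have c1: "\<forall>x\<in>carrier G. \<phi>' (\<phi> x) = x"
    using hom_agree_generate[OF G G hom_compose[OF ph(1) ph'(1)] idG sub a1] gen
    by (auto simp: compose_eq)
  have c2: "\<forall>x\<in>carrier G. \<phi> (\<phi>' x) = x"
    using hom_agree_generate[OF G G hom_compose[OF ph'(1) ph(1)] idG sub a2] gen
    by (auto simp: compose_eq)
  have "bij_betw \<phi> (carrier G) (carrier G)"
  proof (rule bij_betw_byWitness[where f'=\<phi>'])
    show "\<forall>a\<in>carrier G. \<phi>' (\<phi> a) = a" using c1 by simp
    show "\<forall>a'\<in>carrier G. \<phi> (\<phi>' a') = a'" using c2 by simp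
    show "\<phi> ` carrier G \<subseteq> carrier G" using ph(1) by (auto simp: hom_def)
    show "\<phi>' ` carrier G \<subseteq> carrier G" using ph'(1) by (auto simp: hom_def)
  qed
  then have "\<phi> \<in> iso G G" using ph(1) by (simp add: iso_def)
  moreover obtain x where "x \<in> G2" "\<psi> x \<noteq> x" using nt by blast
  ultimately show ?thesis using ph s2 subgroup.mem_carrier by metis
qed


lemma (in group) inv_cancel_l: "x \<in> carrier G \<Longrightarrow> y \<in> carrier G \<Longrightarrow> inv x \<otimes> (x \<otimes> y) = y"
  by (simp add: m_assoc[symmetric])
lemma (in group) inv_cancel_l': "x \<in> carrier G \<Longrightarrow> y \<in> carrier G \<Longrightarrow> x \<otimes> (inv x \<otimes> y) = y"
  by (simp add: m_assoc[symmetric])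

lemma caseA:
  fixes G (structure)
  assumes afp: "amalgamated_free_product G G1 G2 C"
    and g: "g \<in> G2" and gc: "\<forall>c\<in>C. g \<otimes>\<^bsub>G\<^esub> c = c \<otimes>\<^bsub>G\<^esub> g"
    and x: "x \<in> G2" and gx: "g \<otimes>\<^bsub>G\<^esub> x \<noteq> x \<otimes>\<^bsub>G\<^esub> g"
  shows "\<exists>\<phi>. \<phi> \<in> iso G G \<and> (\<forall>x\<in>G1. \<phi> x = x) \<and> (\<exists>x\<in>carrier G. \<phi> x \<noteq> x)"
proof -
  have G: "group G" and s2: "subgroup G2 G" and C: "G1 \<inter> G2 = C"
    using afp unfolding amalgamated_free_product_def by blast+
  interpret group G by fact
  have gG: "g \<in> carrier G" by (rule subgroup.mem_carrier[OF s2 g])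
  have c2: "\<And>y. y \<in> G2 \<Longrightarrow> y \<in> carrier G" by (rule subgroup.mem_carrier[OF s2])
  have ig: "inv g \<in> G2" by (rule subgroup.m_inv_closed[OF s2 g])
  show ?thesis
  proof (rule afp_auto[OF afp, of "\<lambda>y. g \<otimes> y \<otimes> inv g" "\<lambda>y. inv g \<otimes> y \<otimes> g"])
    show "(\<lambda>y. g \<otimes> y \<otimes> inv g) \<in> hom (G\<lparr>carrier := G2\<rparr>) G"
      using gG c2 by (auto simp: hom_def m_assoc inv_cancel_l)
    show "(\<lambda>y. inv g \<otimes> y \<otimes> g) \<in> hom (G\<lparr>carrier := G2\<rparr>) G"
      using gG c2 by (auto simp: hom_def m_assoc inv_cancel_l')
    show "(\<lambda>y. g \<otimes> y \<otimes> inv g) ` G2 \<subseteq> G2" using g ig by (auto intro!: subgroup.m_closed[OF s2])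
    show "(\<lambda>y. inv g \<otimes> y \<otimes> g) ` G2 \<subseteq> G2" using g ig by (auto intro!: subgroup.m_closed[OF s2])
    show "\<forall>y\<in>G2. inv g \<otimes> (g \<otimes> y \<otimes> inv g) \<otimes> g = y"
      using gG c2 by (auto simp: m_assoc inv_cancel_l)
    show "\<forall>y\<in>G2. g \<otimes> (inv g \<otimes> y \<otimes> g) \<otimes> inv g = y"
      using gG c2 by (auto simp: m_assoc inv_cancel_l')
    show "\<forall>c\<in>C. g \<otimes> c \<otimes> inv g = c"
      using gG c2 gc C by (auto simp: m_assoc)
    show "\<forall>c\<in>C. inv g \<otimes> c \<otimes> g = c"
    proof
      fix c assume c: "c \<in> C"
      then have cG: "c \<in> carrier G" using C c2 by blast
      have "g \<otimes> c = c \<otimes> g" using gc c by blast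
      then have "inv g \<otimes> (g \<otimes> c) = inv g \<otimes> (c \<otimes> g)" by simp
      then show "inv g \<otimes> c \<otimes> g = c" using gG cG by (simp add: m_assoc[symmetric])
    qed
    show "\<exists>y\<in>G2. g \<otimes> y \<otimes> inv g \<noteq> y"
    proof (intro bexI[OF _ x] notI)
      assume "g \<otimes> x \<otimes> inv g = x"
      then have "g \<otimes> x \<otimes> inv g \<otimes> g = x \<otimes> g" by simp
      then show False using gx gG c2[OF x] by (simp add: m_assoc)
    qed
  qed
qed

lemma cyclic_comm:
  fixes G (structure)
  assumes "group G" "infinite_cyclic_subgroup G C" "a \<in> C" "b \<in> C"
  shows "a \<otimes>\<^bsub>G\<^esub> b = b \<otimes>\<^bsub>G\<^esub> a"
proof -
  interpret group G by fact
  obtain c where c: "c \<in> C" "C = generate G {c}" "subgroup C G"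
    using assms(2) unfolding infinite_cyclic_subgroup_def by blast
  have cG: "c \<in> carrier G" by (rule subgroup.mem_carrier[OF c(3) c(1)])
  have gp: "C = {c [^] (k::int) | k. k \<in> UNIV}" using c(2) generate_pow[OF cG] by simp
  obtain i :: int where i: "a = c [^] i" using assms(3) gp by blast
  obtain j :: int where j: "b = c [^] j" using assms(4) gp by blast
  have "a \<otimes> b = c [^] (i + j)" using i j cG int_pow_mult by metis
  also have "\<dots> = c [^] (j + i)" by (simp add: add.commute)
  also have "\<dots> = b \<otimes> a" using i j cG int_pow_mult by metis
  finally show ?thesis .
qed


lemma caseB:
  fixes G (structure)
  assumes afp: "amalgamated_free_product G G1 G2 C"
    and cyc: "infinite_cyclic_subgroup G C"
    and nA: "\<not> (\<exists>g\<in>G2. (\<forall>c\<in>C. g \<otimes> c = c \<otimes> g) \<and> (\<exists>x\<in>G2. g \<otimes> x \<noteq> x \<otimes> g))"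
  shows "comm_group (G\<lparr>carrier := G2\<rparr>)"
proof -
  have G: "group G" and s2: "subgroup G2 G" and C: "G1 \<inter> G2 = C"
    using afp unfolding amalgamated_free_product_def by blast+
  interpret group G by fact
  have cent: "\<And>c x. c \<in> C \<Longrightarrow> x \<in> G2 \<Longrightarrow> c \<otimes> x = x \<otimes> c"
  proof -
    fix c x assume c: "c \<in> C" and x: "x \<in> G2"
    have "c \<in> G2" using c C by blast
    moreover have "\<forall>c'\<in>C. c \<otimes> c' = c' \<otimes> c" using cyclic_comm[OF G cyc c] by blast
    ultimately show "c \<otimes> x = x \<otimes> c" using nA x by blast
  qed
  have comm: "\<And>x y. x \<in> G2 \<Longrightarrow> y \<in> G2 \<Longrightarrow> x \<otimes> y = y \<otimes> x"
  proof -
    fix x y assume x: "x \<in> G2" and y: "y \<in> G2"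
    have "\<forall>c\<in>C. x \<otimes> c = c \<otimes> x" using cent x by metis
    then show "x \<otimes> y = y \<otimes> x" using nA x y by blast
  qed
  interpret H: group "G\<lparr>carrier := G2\<rparr>" by (rule subgroup_imp_group[OF s2])
  show ?thesis by (rule H.group_comm_groupI) (simp add: comm)
qed

lemma ds_facts:
  fixes G (structure)
  assumes G: "group G" and ds: "internal_direct_sum G G2 K L"
  shows "\<And>x. x \<in> G2 \<Longrightarrow> \<exists>k\<in>K. \<exists>l\<in>L. x = k \<otimes> l"
    and "\<And>k l k' l'. k \<in> K \<Longrightarrow> l \<in> L \<Longrightarrow> k' \<in> K \<Longrightarrow> l' \<in> L \<Longrightarrow> k \<otimes> l = k' \<otimes> l' \<Longrightarrow> k = k' \<and> l = l'"
proof -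
  interpret group G by fact
  have sK: "subgroup K G" and sL: "subgroup L G" and KL: "K \<inter> L = {\<one>}" and eq: "K <#> L = G2"
    using ds unfolding internal_direct_sum_def by auto
  show "\<And>x. x \<in> G2 \<Longrightarrow> \<exists>k\<in>K. \<exists>l\<in>L. x = k \<otimes> l" using eq unfolding set_mult_def by auto
  fix k l k' l' assume k: "k \<in> K" and l: "l \<in> L" and k': "k' \<in> K" and l': "l' \<in> L" and e: "k \<otimes> l = k' \<otimes> l'"
  have kc: "k \<in> carrier G" by (rule subgroup.mem_carrier[OF sK k])
  have kc': "k' \<in> carrier G" by (rule subgroup.mem_carrier[OF sK k'])
  have lc: "l \<in> carrier G" by (rule subgroup.mem_carrier[OF sL l])
  have lc': "l' \<in> carrier G" by (rule subgroup.mem_carrier[OF sL l'])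
  have "inv k' \<otimes> k = inv k' \<otimes> (k \<otimes> l) \<otimes> inv l" using kc kc' lc by (simp add: m_assoc)
  also have "\<dots> = inv k' \<otimes> (k' \<otimes> l') \<otimes> inv l" using e by simp
  also have "\<dots> = l' \<otimes> inv l" using kc' lc' lc by (simp add: m_assoc[symmetric])
  finally have e2: "inv k' \<otimes> k = l' \<otimes> inv l" .
  have "inv k' \<otimes> k \<in> K" using subgroup.m_closed[OF sK subgroup.m_inv_closed[OF sK k'] k] .
  moreover have "l' \<otimes> inv l \<in> L" using subgroup.m_closed[OF sL l' subgroup.m_inv_closed[OF sL l]] .
  ultimately have "inv k' \<otimes> k = \<one>" using e2 KL by auto
  moreover have "k = k' \<otimes> (inv k' \<otimes> k)" using kc kc' by (simp add: inv_cancel_l')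
  ultimately have kk: "k = k'" using kc' by simp
  then have "l = l'" using e kc lc lc' by simp
  then show "k = k' \<and> l = l'" using kk by simp
qed

lemma caseC1:
  fixes G (structure)
  assumes afp: "amalgamated_free_product G G1 G2 C"
    and ab: "comm_group (G\<lparr>carrier := G2\<rparr>)"
    and ds: "internal_direct_sum G G2 K L" and CK: "C \<subseteq> K"
    and l0: "l0 \<in> L" "l0 \<otimes> l0 \<noteq> \<one>"
  shows "\<exists>\<phi>. \<phi> \<in> iso G G \<and> (\<forall>x\<in>G1. \<phi> x = x) \<and> (\<exists>x\<in>carrier G. \<phi> x \<noteq> x)"
proof -
  have G: "group G" and s2: "subgroup G2 G" and C: "G1 \<inter> G2 = C"
    using afp unfolding amalgamated_free_product_def by blast+
  interpret group G by fact
  have sK: "subgroup K G" and sL: "subgroup L G" and KG: "K \<subseteq> G2" and LG: "L \<subseteq> G2"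
    using ds unfolding internal_direct_sum_def by auto
  interpret A: comm_group "G\<lparr>carrier := G2\<rparr>" by fact
  have comm: "\<And>x y. x \<in> G2 \<Longrightarrow> y \<in> G2 \<Longrightarrow> x \<otimes> y = y \<otimes> x"
    using A.m_comm by simp
  have c2: "\<And>y. y \<in> G2 \<Longrightarrow> y \<in> carrier G" by (rule subgroup.mem_carrier[OF s2])
  have lcomm: "\<And>x y z. x \<in> G2 \<Longrightarrow> y \<in> G2 \<Longrightarrow> z \<in> G2 \<Longrightarrow> x \<otimes> (y \<otimes> z) = y \<otimes> (x \<otimes> z)"
    by (metis c2 comm m_assoc)
  note dec = ds_facts[OF G ds]
  define \<psi> where "\<psi> x = (THE y. \<exists>k\<in>K. \<exists>l\<in>L. x = k \<otimes> l \<and> y = k \<otimes> inv l)" for x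
  have psi: "\<psi> (k \<otimes> l) = k \<otimes> inv l" if k: "k \<in> K" and l: "l \<in> L" for k l
    unfolding \<psi>_def
  proof (rule the_equality)
    show "\<exists>k'\<in>K. \<exists>l'\<in>L. k \<otimes> l = k' \<otimes> l' \<and> k \<otimes> inv l = k' \<otimes> inv l'" using k l by blast
    fix y assume "\<exists>k'\<in>K. \<exists>l'\<in>L. k \<otimes> l = k' \<otimes> l' \<and> y = k' \<otimes> inv l'"
    then obtain k' l' where "k' \<in> K" "l' \<in> L" "k \<otimes> l = k' \<otimes> l'" "y = k' \<otimes> inv l'" by blast
    then show "y = k \<otimes> inv l" using dec(2)[OF k l] by metis
  qed
  have kG: "\<And>k. k \<in> K \<Longrightarrow> k \<in> G2" using KG by blast
  have lG: "\<And>l. l \<in> L \<Longrightarrow> l \<in> G2" using LG by blast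
  have ilL: "\<And>l. l \<in> L \<Longrightarrow> inv l \<in> L" by (rule subgroup.m_inv_closed[OF sL])
  have mG: "\<And>x y. x \<in> G2 \<Longrightarrow> y \<in> G2 \<Longrightarrow> x \<otimes> y \<in> G2" by (rule subgroup.m_closed[OF s2])
  have mK: "\<And>x y. x \<in> K \<Longrightarrow> y \<in> K \<Longrightarrow> x \<otimes> y \<in> K" by (rule subgroup.m_closed[OF sK])
  have mL: "\<And>x y. x \<in> L \<Longrightarrow> y \<in> L \<Longrightarrow> x \<otimes> y \<in> L" by (rule subgroup.m_closed[OF sL])
  have img: "\<psi> ` G2 \<subseteq> G2"
  proof
    fix y assume "y \<in> \<psi> ` G2"
    then obtain x where x: "x \<in> G2" "y = \<psi> x" by blast
    then obtain k l where "k \<in> K" "l \<in> L" "x = k \<otimes> l" using dec(1) by blast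
    then show "y \<in> G2" using x psi kG lG ilL mG by auto
  qed
  have invo: "\<forall>x\<in>G2. \<psi> (\<psi> x) = x"
  proof
    fix x assume "x \<in> G2"
    then obtain k l where kl: "k \<in> K" "l \<in> L" "x = k \<otimes> l" using dec(1) by blast
    then show "\<psi> (\<psi> x) = x" using psi ilL lG c2 by simp
  qed
  have hom: "\<psi> \<in> hom (G\<lparr>carrier := G2\<rparr>) G"
  proof -
    have "\<psi> (x \<otimes> y) = \<psi> x \<otimes> \<psi> y" if x: "x \<in> G2" and y: "y \<in> G2" for x y
    proof -
      obtain k l where kl: "k \<in> K" "l \<in> L" "x = k \<otimes> l" using dec(1) x by blast
      obtain k' l' where kl': "k' \<in> K" "l' \<in> L" "y = k' \<otimes> l'" using dec(1) y by blast
      have "x \<otimes> y = (k \<otimes> k') \<otimes> (l \<otimes> l')"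
        using kl kl' kG lG c2 by (simp add: m_assoc lcomm)
      then have "\<psi> (x \<otimes> y) = (k \<otimes> k') \<otimes> inv (l \<otimes> l')" using psi mK mL kl kl' by simp
      also have "\<dots> = (k \<otimes> inv l) \<otimes> (k' \<otimes> inv l')"
        using kl kl' kG lG c2 ilL comm[OF lG[OF ilL[OF kl'(2)]] lG[OF ilL[OF kl(2)]]]
        by (simp add: m_assoc lcomm inv_mult_group)
      also have "\<dots> = \<psi> x \<otimes> \<psi> y" using psi kl kl' by simp
      finally show ?thesis .
    qed
    then show ?thesis using img c2 by (auto simp: hom_def)
  qed
  show ?thesis
  proof (rule afp_auto[OF afp hom hom img img invo invo])
    show "\<forall>c\<in>C. \<psi> c = c"
    proof
      fix c assume "c \<in> C"
      then have c: "c \<in> K" using CK by blast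
      have "\<psi> (c \<otimes> \<one>) = c \<otimes> inv \<one>" using psi c subgroup.one_closed[OF sL] by blast
      then show "\<psi> c = c" using c kG c2 by simp
    qed
    then show "\<forall>c\<in>C. \<psi> c = c" .
    have "\<psi> (\<one> \<otimes> l0) = \<one> \<otimes> inv l0" using psi l0 subgroup.one_closed[OF sK] by blast
    then have "\<psi> l0 = inv l0" using l0 lG c2 by simp
    moreover have "inv l0 \<noteq> l0"
    proof
      assume "inv l0 = l0"
      then have "l0 \<otimes> l0 = inv l0 \<otimes> l0" by simp
      then show False using l0 lG c2 by simp
    qed
    ultimately show "\<exists>x\<in>G2. \<psi> x \<noteq> x" using l0 lG by metis
  qed
qed

lemma subgroup_chain_union:
  fixes G (structure)
  assumes ne: "Ch \<noteq> {}" and sg: "\<forall>N\<in>Ch. subgroup N G" and ch: "chain\<^sub>\<subseteq> Ch"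
  shows "subgroup (\<Union>Ch) G"
proof (rule subgroup.intro)
  show "\<Union>Ch \<subseteq> carrier G" using sg subgroup.subset by blast
  show "\<And>x y. x \<in> \<Union>Ch \<Longrightarrow> y \<in> \<Union>Ch \<Longrightarrow> x \<otimes> y \<in> \<Union>Ch"
  proof -
    fix x y assume "x \<in> \<Union>Ch" "y \<in> \<Union>Ch"
    then obtain P1 Q1 where XY: "P1 \<in> Ch" "Q1 \<in> Ch" "x \<in> P1" "y \<in> Q1" by blast
    then have "P1 \<subseteq> Q1 \<or> Q1 \<subseteq> P1" using ch unfolding chain_subset_def by blast
    then show "x \<otimes> y \<in> \<Union>Ch"
    proof
      assume "P1 \<subseteq> Q1"
      then have "x \<otimes> y \<in> Q1" using XY sg subgroup.m_closed by (metis subsetD)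
      then show ?thesis using XY by blast
    next
      assume "Q1 \<subseteq> P1"
      then have "x \<otimes> y \<in> P1" using XY sg subgroup.m_closed by (metis subsetD)
      then show ?thesis using XY by blast
    qed
  qed
  obtain N where "N \<in> Ch" using ne by blast
  then show "\<one> \<in> \<Union>Ch" using sg subgroup.one_closed by blast
  show "inv x \<in> \<Union>Ch" if xin: "x \<in> \<Union>Ch" for x
  proof -
    obtain P1 where "P1 \<in> Ch" "x \<in> P1" using xin by blast
    moreover then have "inv x \<in> P1" using sg subgroup.m_inv_closed by metis
    ultimately show ?thesis by blast
  qed
qed

lemma caseC2:
  fixes G (structure)
  assumes afp: "amalgamated_free_product G G1 G2 C"
    and ab: "comm_group (G\<lparr>carrier := G2\<rparr>)"
    and ds: "internal_direct_sum G G2 K L" and CK: "C \<subseteq> K"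
    and a: "a \<in> L" "a \<noteq> \<one>" and b: "b \<in> L" "b \<noteq> \<one>" "b \<noteq> a"
    and sq: "\<forall>l\<in>L. l \<otimes> l = \<one>"
  shows "\<exists>\<phi>. \<phi> \<in> iso G G \<and> (\<forall>x\<in>G1. \<phi> x = x) \<and> (\<exists>x\<in>carrier G. \<phi> x \<noteq> x)"
proof -
  have G: "group G" and s2: "subgroup G2 G" and C: "G1 \<inter> G2 = C"
    using afp unfolding amalgamated_free_product_def by blast+
  interpret group G by fact
  have sK: "subgroup K G" and sL: "subgroup L G" and KG: "K \<subseteq> G2" and LG: "L \<subseteq> G2"
    and KL: "K \<inter> L = {\<one>}"
    using ds unfolding internal_direct_sum_def by auto
  interpret A: comm_group "G\<lparr>carrier := G2\<rparr>" by fact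
  have comm: "\<And>x y. x \<in> G2 \<Longrightarrow> y \<in> G2 \<Longrightarrow> x \<otimes> y = y \<otimes> x"
    using A.m_comm by simp
  have c2: "\<And>y. y \<in> G2 \<Longrightarrow> y \<in> carrier G" by (rule subgroup.mem_carrier[OF s2])
  have lcomm: "\<And>x y z. x \<in> G2 \<Longrightarrow> y \<in> G2 \<Longrightarrow> z \<in> G2 \<Longrightarrow> x \<otimes> (y \<otimes> z) = y \<otimes> (x \<otimes> z)"
    by (metis c2 comm m_assoc)
  note dec = ds_facts[OF G ds]
  have kG: "\<And>k. k \<in> K \<Longrightarrow> k \<in> G2" using KG by blast
  have lG: "\<And>l. l \<in> L \<Longrightarrow> l \<in> G2" using LG by blast
  have mG: "\<And>x y. x \<in> G2 \<Longrightarrow> y \<in> G2 \<Longrightarrow> x \<otimes> y \<in> G2" by (rule subgroup.m_closed[OF s2])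
  have mK: "\<And>x y. x \<in> K \<Longrightarrow> y \<in> K \<Longrightarrow> x \<otimes> y \<in> K" by (rule subgroup.m_closed[OF sK])
  have sqK: "\<And>x. x \<in> G2 \<Longrightarrow> x \<otimes> x \<in> K"
  proof -
    fix x assume "x \<in> G2"
    then obtain k l where kl: "k \<in> K" "l \<in> L" "x = k \<otimes> l" using dec(1) by blast
    have "x \<otimes> x = (k \<otimes> k) \<otimes> (l \<otimes> l)" using kl kG lG c2 by (simp add: m_assoc lcomm)
    also have "\<dots> = k \<otimes> k" using sq kl kG c2 by simp
    finally show "x \<otimes> x \<in> K" using mK kl by simp
  qed
  have aK: "a \<notin> K" using a KL by blast
  define AA where "AA = {N. subgroup N G \<and> K \<subseteq> N \<and> N \<subseteq> G2 \<and> a \<notin> N}"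
  have "\<forall>Ch\<in>chains AA. \<exists>U\<in>AA. \<forall>P1\<in>Ch. P1 \<subseteq> U"
  proof
    fix Ch assume Ch: "Ch \<in> chains AA"
    show "\<exists>U\<in>AA. \<forall>P1\<in>Ch. P1 \<subseteq> U"
    proof (cases "Ch = {}")
      case True
      have "K \<in> AA" using sK KG aK unfolding AA_def by blast
      then show ?thesis using True by blast
    next
      case False
      have sub: "Ch \<subseteq> AA" and chs: "chain\<^sub>\<subseteq> Ch" using Ch unfolding chains_def by auto
      have "subgroup (\<Union>Ch) G"
        by (rule subgroup_chain_union[OF False _ chs]) (use sub in \<open>auto simp: AA_def\<close>)
      moreover have "K \<subseteq> \<Union>Ch" using False sub unfolding AA_def by blast
      moreover have "\<Union>Ch \<subseteq> G2" "a \<notin> \<Union>Ch" using sub unfolding AA_def by blast+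
      ultimately have "\<Union>Ch \<in> AA" unfolding AA_def by blast
      then show ?thesis by blast
    qed
  qed
  from Zorn_Lemma2[OF this] obtain M where MA: "M \<in> AA" and Mmax: "\<forall>P1\<in>AA. M \<subseteq> P1 \<longrightarrow> P1 = M"
    by blast
  have sM: "subgroup M G" and KM: "K \<subseteq> M" and MG: "M \<subseteq> G2" and aM: "a \<notin> M"
    using MA unfolding AA_def by auto
  have mMG: "\<And>m. m \<in> M \<Longrightarrow> m \<in> G2" using MG by blast
  have mM: "\<And>x y. x \<in> M \<Longrightarrow> y \<in> M \<Longrightarrow> x \<otimes> y \<in> M" by (rule subgroup.m_closed[OF sM])
  have iM: "\<And>x. x \<in> M \<Longrightarrow> inv x \<in> M" by (rule subgroup.m_inv_closed[OF sM])
  have iG: "\<And>x. x \<in> G2 \<Longrightarrow> inv x \<in> G2" by (rule subgroup.m_inv_closed[OF s2])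
  have key: "x \<otimes> a \<in> M" if x: "x \<in> G2" "x \<notin> M" for x
  proof -
    define s where "s = x \<otimes> x"
    have sM': "s \<in> M" using sqK[OF x(1)] KM unfolding s_def by blast
    define N where "N = M \<union> (\<lambda>m. m \<otimes> x) ` M"
    have sN: "subgroup N G"
    proof (rule subgroup.intro)
      show "N \<subseteq> carrier G" unfolding N_def using mMG c2 x mG by blast
      show "\<one> \<in> N" unfolding N_def using subgroup.one_closed[OF sM] by blast
      show "u \<otimes> v \<in> N" if u: "u \<in> N" and v: "v \<in> N" for u v
      proof -
        consider (a) "u \<in> M" "v \<in> M" | (b) m where "u \<in> M" "m \<in> M" "v = m \<otimes> x"
          | (c) m where "m \<in> M" "u = m \<otimes> x" "v \<in> M"
          | (d) m m' where "m \<in> M" "m' \<in> M" "u = m \<otimes> x" "v = m' \<otimes> x"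
          using u v unfolding N_def by blast
        then show ?thesis
        proof cases
          case a then show ?thesis using mM unfolding N_def by blast
        next
          case (b m)
          then have "u \<otimes> v = (u \<otimes> m) \<otimes> x" using mMG c2 x by (simp add: m_assoc)
          moreover have "u \<otimes> m \<in> M" by (rule mM[OF b(1,2)])
          ultimately show ?thesis unfolding N_def by blast
        next
          case (c m)
          then have "u \<otimes> v = (m \<otimes> v) \<otimes> x" using mMG c2 x comm[OF x(1) mMG[OF c(3)]] by (simp add: m_assoc lcomm)
          moreover have "m \<otimes> v \<in> M" by (rule mM[OF c(1,3)])
          ultimately show ?thesis unfolding N_def by blast
        next
          case (d m m')
          then have "u \<otimes> v = (m \<otimes> m') \<otimes> s" using mMG c2 x unfolding s_def by (simp add: m_assoc lcomm)
          moreover have "(m \<otimes> m') \<otimes> s \<in> M" by (rule mM[OF mM[OF d(1,2)] sM'])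
          ultimately show ?thesis unfolding N_def by simp
        qed
      qed
      show "inv u \<in> N" if u: "u \<in> N" for u
      proof -
        consider (a) "u \<in> M" | (b) m where "m \<in> M" "u = m \<otimes> x" using u unfolding N_def by blast
        then show ?thesis
        proof cases
          case a then show ?thesis using iM unfolding N_def by blast
        next
          case (b m)
          have mG2: "m \<in> G2" using b(1) mMG by blast
          have sG2: "s \<in> G2" using sM' mMG by blast
          have e1: "x \<otimes> (m \<otimes> x) = m \<otimes> s" unfolding s_def using lcomm[OF x(1) mG2 x(1)] .
          have e2: "inv s \<otimes> (m \<otimes> s) = m \<otimes> (inv s \<otimes> s)" using lcomm[OF iG[OF sG2] mG2 sG2] .
          have "(inv m \<otimes> inv s \<otimes> x) \<otimes> (m \<otimes> x) = \<one>"
            using c2[OF mG2] c2[OF sG2] c2[OF x(1)] by (simp add: m_assoc e1 e2)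
          then have "inv u = inv m \<otimes> inv s \<otimes> x"
            using b mMG c2 x sM' by (simp add: inv_equality)
          then show ?thesis using b iM sM' mM unfolding N_def by blast
        qed
      qed
    qed
    have "a \<in> N"
    proof (rule ccontr)
      assume "a \<notin> N"
      moreover have "K \<subseteq> N" "N \<subseteq> G2" unfolding N_def using KM MG x mG by auto
      ultimately have "N \<in> AA" using sN unfolding AA_def by blast
      moreover have "M \<subseteq> N" unfolding N_def by blast
      ultimately have "N = M" using Mmax by blast
      moreover have "x \<in> N" unfolding N_def
        using subgroup.one_closed[OF sM] x c2 by (metis UnI2 image_eqI l_one)
      ultimately show False using x by blast
    qed
    then obtain m where m: "m \<in> M" "a = m \<otimes> x" using aM unfolding N_def by blast
    then have "x \<otimes> a = m \<otimes> s" unfolding s_def using mMG c2 x by (simp add: m_assoc lcomm)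
    then show ?thesis using m sM' mM by simp
  qed
  have aG: "a \<in> G2" "b \<in> G2" using a b lG by auto
  have aa: "a \<otimes> a = \<one>" "b \<otimes> b = \<one>" using sq a b by auto
  define m0 where "m0 = (if b \<in> M then b else b \<otimes> a)"
  have m0: "m0 \<in> M" "m0 \<noteq> \<one>" "m0 \<otimes> m0 = \<one>"
  proof -
    show "m0 \<in> M" using key[OF aG(2)] unfolding m0_def by auto
    show "m0 \<noteq> \<one>"
    proof (cases "b \<in> M")
      case True then show ?thesis using b unfolding m0_def by simp
    next
      case False
      show ?thesis
      proof
        assume "m0 = \<one>"
        then have "b \<otimes> a = \<one>" using False unfolding m0_def by simp
        then have "b \<otimes> a \<otimes> a = a" using aG c2 by simp
        then show False using aa aG c2 b by (simp add: m_assoc)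
      qed
    qed
    show "m0 \<otimes> m0 = \<one>"
      unfolding m0_def using aa aG c2 lcomm[OF aG(1) aG(2) aG(1)] by (simp add: m_assoc)
  qed
  have m0G: "m0 \<in> G2" using m0 mMG by blast
  define \<psi> where "\<psi> x = (if x \<in> M then x else x \<otimes> m0)" for x
  have out1: "x \<otimes> m0 \<notin> M" if "x \<in> G2" "x \<notin> M" for x
  proof
    assume "x \<otimes> m0 \<in> M"
    then have "x \<otimes> m0 \<otimes> m0 \<in> M" using mM m0 by blast
    then show False using that m0 m0G c2 by (simp add: m_assoc)
  qed
  have out2: "x \<otimes> y \<in> M" if "x \<in> G2" "x \<notin> M" "y \<in> G2" "y \<notin> M" for x y
  proof -
    have "(x \<otimes> a) \<otimes> (y \<otimes> a) \<in> M" using key that mM by blast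
    moreover have "(x \<otimes> a) \<otimes> (y \<otimes> a) = x \<otimes> y \<otimes> (a \<otimes> a)" using that aG c2 by (simp add: m_assoc lcomm)
    ultimately show ?thesis using aa that c2 mG by simp
  qed
  have out3: "x \<otimes> y \<notin> M" if "x \<in> M" "y \<in> G2" "y \<notin> M" for x y
  proof
    assume "x \<otimes> y \<in> M"
    then have "inv x \<otimes> (x \<otimes> y) \<in> M" using iM mM that by blast
    then show False using that mMG c2 by (simp add: inv_cancel_l)
  qed
  have img: "\<psi> ` G2 \<subseteq> G2" unfolding \<psi>_def using mG m0G by auto
  have invo: "\<forall>x\<in>G2. \<psi> (\<psi> x) = x"
    unfolding \<psi>_def using out1 m0 m0G c2 by (auto simp: m_assoc)
  have hom: "\<psi> \<in> hom (G\<lparr>carrier := G2\<rparr>) G"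
  proof -
    have "\<psi> (x \<otimes> y) = \<psi> x \<otimes> \<psi> y" if x: "x \<in> G2" and y: "y \<in> G2" for x y
    proof (cases "x \<in> M")
      case True
      show ?thesis
      proof (cases "y \<in> M")
        case True then show ?thesis using \<open>x \<in> M\<close> mM unfolding \<psi>_def by simp
      next
        case False then show ?thesis using \<open>x \<in> M\<close> out3 x y m0G c2 unfolding \<psi>_def by (simp add: m_assoc)
      qed
    next
      case xn: False
      show ?thesis
      proof (cases "y \<in> M")
        case True
        have "x \<otimes> y \<notin> M" using out3[OF True x xn] comm[OF x y] by simp
        moreover have "x \<otimes> m0 \<otimes> y = x \<otimes> y \<otimes> m0" using comm[OF m0G y] x y m0G c2 by (simp add: m_assoc)
        ultimately show ?thesis using True xn unfolding \<psi>_def by simp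
      next
        case False
        have "x \<otimes> y \<in> M" using out2 x y xn False by blast
        moreover have "x \<otimes> m0 \<otimes> (y \<otimes> m0) = x \<otimes> y \<otimes> (m0 \<otimes> m0)" using x y m0G c2 by (simp add: m_assoc lcomm)
        ultimately show ?thesis using False xn m0 x y c2 mG unfolding \<psi>_def by simp
      qed
    qed
    then show ?thesis using img c2 by (auto simp: hom_def)
  qed
  show ?thesis
  proof (rule afp_auto[OF afp hom hom img img invo invo])
    show "\<forall>c\<in>C. \<psi> c = c" using CK KM unfolding \<psi>_def by auto
    then show "\<forall>c\<in>C. \<psi> c = c" .
    have "\<psi> a = a \<otimes> m0" using aM unfolding \<psi>_def by simp
    moreover have "a \<otimes> m0 \<noteq> a" using m0 m0G aG c2 by simp
    ultimately show "\<exists>x\<in>G2. \<psi> x \<noteq> x" using aG by metis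
  qed
qed

lemma caseC:
  fixes G (structure)
  assumes afp: "amalgamated_free_product G G1 G2 C"
    and ab: "comm_group (G\<lparr>carrier := G2\<rparr>)"
    and ds: "internal_direct_sum G G2 K L" and CK: "C \<subseteq> K" and Lbig: "infinite L \<or> card L > 2"
  shows "\<exists>\<phi>. \<phi> \<in> iso G G \<and> (\<forall>x\<in>G1. \<phi> x = x) \<and> (\<exists>x\<in>carrier G. \<phi> x \<noteq> x)"
proof (cases "\<exists>l0\<in>L. l0 \<otimes> l0 \<noteq> \<one>")
  case True
  then obtain l0 where "l0 \<in> L" "l0 \<otimes> l0 \<noteq> \<one>" by blast
  then show ?thesis using caseC1[OF afp ab ds CK] by blast
next
  case False
  then have sq: "\<forall>l\<in>L. l \<otimes> l = \<one>" by blast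
  have big: "\<not> L \<subseteq> {u, v}" for u v
  proof
    assume sub: "L \<subseteq> {u, v}"
    then have fin: "finite L" using finite_subset by blast
    have "card {u, v} \<le> 2" by (cases "u = v") auto
    moreover have "card L \<le> card {u, v}" using sub by (simp add: card_mono)
    ultimately show False using Lbig fin by linarith
  qed
  obtain a where a: "a \<in> L" "a \<noteq> \<one>" using big[of "\<one>" "\<one>"] by blast
  obtain b where b: "b \<in> L" "b \<noteq> \<one>" "b \<noteq> a" using big[of "\<one>" a] by blast
  show ?thesis by (rule caseC2[OF afp ab ds CK a b sq])
qed

theorem lemma4p3:
  fixes G :: "('a, 'b) monoid_scheme" and G1 G2 C :: "'a set"
  assumes "amalgamated_free_product G G1 G2 C"
    and "infinite_cyclic_subgroup G C"
    and "comm_group (G\<lparr>carrier := G2\<rparr>) \<Longrightarrow>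
           \<exists>K L. internal_direct_sum G G2 K L \<and> C \<subseteq> K \<and> (infinite L \<or> card L > 2)"
  shows "\<exists>\<phi>. \<phi> \<in> iso G G \<and> (\<forall>x\<in>G1. \<phi> x = x) \<and> (\<exists>x\<in>carrier G. \<phi> x \<noteq> x)"
proof (cases "\<exists>g\<in>G2. (\<forall>c\<in>C. g \<otimes>\<^bsub>G\<^esub> c = c \<otimes>\<^bsub>G\<^esub> g) \<and> (\<exists>x\<in>G2. g \<otimes>\<^bsub>G\<^esub> x \<noteq> x \<otimes>\<^bsub>G\<^esub> g)")
  case True
  then obtain g x where "g \<in> G2" "\<forall>c\<in>C. g \<otimes>\<^bsub>G\<^esub> c = c \<otimes>\<^bsub>G\<^esub> g" "x \<in> G2" "g \<otimes>\<^bsub>G\<^esub> x \<noteq> x \<otimes>\<^bsub>G\<^esub> g"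
    by blast
  then show ?thesis using caseA[OF assms(1)] by blast
next
  case False
  then have ab: "comm_group (G\<lparr>carrier := G2\<rparr>)" using caseB[OF assms(1,2)] by blast
  then obtain K L where "internal_direct_sum G G2 K L" "C \<subseteq> K" "infinite L \<or> card L > 2"
    using assms(3) by blast
  then show ?thesis using caseC[OF assms(1) ab] by blast
qed

end
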